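(* Let $A$ and $B$ be nontrivial commutative groups. (a) If $A$ is a torsion group and $B$ is torsion-free, then $\mathcal D(A,B)=\{-\infty,0,\infty\}$. (b) If $A$ is a torsion group and $B$ is torsion-split with $B[\mathrm{tors}]\ne\{0\}$ and $B/B[\mathrm{tors}]\ne\{0\}$, then $\mathcal D(A,B)=\mathcal D(A,B[\mathrm{tors}])\cup\{\infty\}$. (c) If there is a surjective homomorphism $A\to\mathbb{Z}$, then $\mathcal D(A,B)=\widetilde{\mathbb N}$.
   Context: For commutative groups $A,B$, $B^A$ denotes the commutative group (under pointwise addition) of all maps $A\to B$. For $a\in A$, the difference operator $\Delta_a:B^A\to B^A$ is $(\Delta_a f)(x)=f(x+a)-f(x)$. Let $\widetilde{\mathbb N}=\mathbb N\cup\{-\infty,\infty\}$ ($\mathbb N=\{0,1,2,\dots\}$), totally ordered with $-\infty$ least and $\infty$ greatest. The functional degree $\operatorname{fdeg}(f)\in\widetilde{\mathbb N}$ of $f\in B^A$ is: $-\infty$ if $f=0$; otherwise the least $n\in\mathbb N$ such that $\Delta_{a_1}\cdots\Delta_{a_{n+1}}f=0$ for all $a_1,\dots,a_{n+1}\in A$; and $\infty$ if no such $n$ exists. $\mathcal D(A,B)=\{\operatorname{fdeg}(f):f\in B^A\}\subseteq\widetilde{\mathbb N}$. $B[\mathrm{tors}]$ is the torsion subgroup of $B$; $B$ is torsion-split if $B[\mathrm{tors}]$ is a direct summand of $B$. *)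

theory Defs
  imports Main
begin

datatype xnat = NegInf | Fin nat | PosInf

definition diff_op :: "'a::ab_group_add \<Rightarrow> ('a \<Rightarrow> 'b::ab_group_add) \<Rightarrow> ('a \<Rightarrow> 'b)" where
  "diff_op a f = (\<lambda>x. f (x + a) - f x)"

definition kills :: "nat \<Rightarrow> ('a::ab_group_add \<Rightarrow> 'b::ab_group_add) \<Rightarrow> bool" where
  "kills n f \<longleftrightarrow> (\<forall>as. length as = Suc n \<longrightarrow> foldr diff_op as f = (\<lambda>_. 0))"

definition fdeg :: "('a::ab_group_add \<Rightarrow> 'b::ab_group_add) \<Rightarrow> xnat" where
  "fdeg f = (if f = (\<lambda>_. 0) then NegInf
             else if (\<exists>n. kills n f) then Fin (LEAST n. kills n f) else PosInf)"

text \<open>Degrees of maps \<open>A \<rightarrow> B\<close> with values in a subgroup \<open>S\<close> of \<open>B\<close>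
  (for \<open>S = UNIV\<close> this is \<open>\<D>(A,B)\<close>; for \<open>S\<close> a subgroup it is \<open>\<D>(A,S)\<close>,
  since the difference operators on maps into \<open>S\<close> agree with those computed in \<open>B\<close>).\<close>
definition DD :: "'a::ab_group_add itself \<Rightarrow> 'b::ab_group_add set \<Rightarrow> xnat set" where
  "DD _ S = fdeg ` {f :: 'a::ab_group_add \<Rightarrow> 'b::ab_group_add. range f \<subseteq> S}"

definition nsmul :: "nat \<Rightarrow> 'b::ab_group_add \<Rightarrow> 'b" where
  "nsmul n b = (((+) b) ^^ n) 0"

definition tors :: "'b::ab_group_add set" where
  "tors = {b. \<exists>n>0. nsmul n b = 0}"

definition torsion_group :: "'b::ab_group_add itself \<Rightarrow> bool" where
  "torsion_group _ \<longleftrightarrow> (tors :: 'b set) = UNIV"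

definition torsion_free :: "'b::ab_group_add itself \<Rightarrow> bool" where
  "torsion_free _ \<longleftrightarrow> (tors :: 'b set) = {0}"

definition is_subgroup :: "'b::ab_group_add set \<Rightarrow> bool" where
  "is_subgroup C \<longleftrightarrow> 0 \<in> C \<and> (\<forall>x\<in>C. \<forall>y\<in>C. x - y \<in> C)"

definition torsion_split :: "'b::ab_group_add itself \<Rightarrow> bool" where
  "torsion_split _ \<longleftrightarrow> (\<exists>C :: 'b set. is_subgroup C \<and> tors \<inter> C = {0} \<and>
       (\<forall>b. \<exists>t\<in>tors. \<exists>c\<in>C. b = t + c))"

end

theory Submission
  imports Defs
begin

lemma foldr_zero: "foldr diff_op as (\<lambda>_. 0::'b::ab_group_add) = (\<lambda>_. 0)"
  by (induction as) (auto simp: diff_op_def)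

lemma kills_Suc: "kills m (f::'a::ab_group_add \<Rightarrow> 'b::ab_group_add) \<Longrightarrow> kills (Suc m) f"
  unfolding kills_def
proof (intro allI impI)
  fix as :: "'a list" assume k: "\<forall>as. length as = Suc m \<longrightarrow> foldr diff_op as f = (\<lambda>_. 0)"
    and l: "length as = Suc (Suc m)"
  then obtain a bs where "as = a # bs" "length bs = Suc m" by (cases as) auto
  thus "foldr diff_op as f = (\<lambda>_. 0)" using k by (simp add: diff_op_def)
qed

lemma kills_mono: assumes "m \<le> k" "kills m f" shows "kills k f"
  using assms by (induction k rule: dec_induct) (auto intro: kills_Suc)

lemma foldr_add: "foldr diff_op as (\<lambda>x. f x + g x) = (\<lambda>x. foldr diff_op as f x + foldr diff_op as g x)"
  by (induction as) (auto simp: diff_op_def algebra_simps)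

lemma foldr_diff: "foldr diff_op as (\<lambda>x. f x - g x) = (\<lambda>x. foldr diff_op as f x - foldr diff_op as g x)"
  by (induction as) (auto simp: diff_op_def algebra_simps)

lemma kills_add: "kills n f \<Longrightarrow> kills n g \<Longrightarrow> kills n (\<lambda>x. f x + g x)"
  unfolding kills_def by (simp add: foldr_add)

lemma kills_diff: "kills n f \<Longrightarrow> kills n g \<Longrightarrow> kills n (\<lambda>x. f x - g x)"
  unfolding kills_def by (simp add: foldr_diff)

lemma foldr_hom: assumes "\<And>x y. p (x - y) = p x - p y"
  shows "foldr diff_op as (\<lambda>x. p (f x)) = (\<lambda>x. p (foldr diff_op as f x))"
  by (induction as) (auto simp: diff_op_def assms)

lemma foldr_range: assumes C: "is_subgroup C" and r: "range f \<subseteq> C"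
  shows "range (foldr diff_op as f) \<subseteq> C"
proof (induction as)
  case Nil then show ?case using r by simp
next
  case (Cons a as)
  have "foldr diff_op as f (x + a) - foldr diff_op as f x \<in> C" for x
  proof -
    have "foldr diff_op as f (x + a) \<in> C" "foldr diff_op as f x \<in> C" using Cons.IH by auto
    thus ?thesis using C by (auto simp: is_subgroup_def)
  qed
  then show ?case by (auto simp: diff_op_def[of a])
qed

lemma nsmul_0[simp]: "nsmul 0 b = 0" by (simp add: nsmul_def)
lemma nsmul_Suc[simp]: "nsmul (Suc n) b = b + nsmul n b" by (simp add: nsmul_def)
lemma nsmul_zero[simp]: "nsmul n (0::'b::ab_group_add) = 0" by (induction n) auto
lemma nsmul_add_n: "nsmul (m + n) b = nsmul m b + nsmul n b" by (induction m) (auto simp: add.assoc)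
lemma nsmul_mult: "nsmul (m * n) b = nsmul m (nsmul n b)" by (induction m) (auto simp: nsmul_add_n)
lemma nsmul_diff: "nsmul n (x - y) = nsmul n x - nsmul n (y::'b::ab_group_add)"
  by (induction n) (auto simp: algebra_simps)

lemma zero_tors: "0 \<in> tors"
  unfolding tors_def by (rule CollectI, rule exI[of _ 1]) simp

lemma tors_diff: assumes "x \<in> tors" "y \<in> tors" shows "x - y \<in> tors"
proof -
  from assms obtain m n where m: "m > 0" "nsmul m x = 0" and n: "n > 0" "nsmul n y = 0"
    by (auto simp: tors_def)
  have "nsmul (m*n) x = 0" using m by (metis mult.commute nsmul_mult nsmul_zero)
  moreover have "nsmul (m*n) y = 0" using n by (metis nsmul_mult nsmul_zero)
  ultimately have "nsmul (m*n) (x - y) = 0" by (simp add: nsmul_diff)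
  thus ?thesis using m n unfolding tors_def by (auto intro!: exI[of _ "m*n"])
qed

lemma telescope: assumes "\<And>x. g (x + a) = g x + c"
  shows "g (x + nsmul m a) = g x + nsmul m (c::'b::ab_group_add)"
proof (induction m)
  case 0 then show ?case by simp
next
  case (Suc m)
  have "g (x + nsmul (Suc m) a) = g ((x + nsmul m a) + a)" by (simp add: algebra_simps)
  also have "\<dots> = g (x + nsmul m a) + c" by (rule assms)
  also have "\<dots> = g x + nsmul (Suc m) c" using Suc by (simp add: algebra_simps)
  finally show ?case .
qed

lemma kills0_const: "kills 0 f \<Longrightarrow> f (x + a) = f x"
proof -
  assume "kills 0 f"
  hence "foldr diff_op [a] f = (\<lambda>_. 0)" unfolding kills_def by (metis length_Cons list.size(3))
  hence "diff_op a f x = 0" by simp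
  thus ?thesis by (simp add: diff_op_def)
qed

lemma main_kills0:
  fixes f :: "'a::ab_group_add \<Rightarrow> 'b::ab_group_add"
  assumes tA: "(tors :: 'a set) = UNIV" and C: "is_subgroup C" and TC: "tors \<inter> C = {0}"
    and rf: "range f \<subseteq> C" and k: "kills n f"
  shows "kills 0 f"
proof (rule ccontr)
  assume nk0: "\<not> kills 0 f"
  define N where "N = (LEAST n. kills n f)"
  have kN: "kills N f" using k LeastI N_def by metis
  have "N \<noteq> 0"
  proof
    assume "N = 0" then show False using nk0 kN by simp
  qed
  then obtain p where Np: "N = Suc p" by (cases N) auto
  have "\<not> kills p f" using not_less_Least[of p "\<lambda>n. kills n f"] N_def Np by auto
  then obtain as where las: "length as = Suc p" and nz: "foldr diff_op as f \<noteq> (\<lambda>_. 0)"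
    by (auto simp: kills_def)
  then obtain a1 rest where as: "as = a1 # rest" by (cases as) auto
  define g where "g = foldr diff_op rest f"
  have lrest: "length rest = p" using las as by simp
  have dd: "diff_op b (diff_op a1 g) = (\<lambda>_. 0)" for b
  proof -
    have "length (b # a1 # rest) = Suc N" using lrest Np by simp
    hence "foldr diff_op (b # a1 # rest) f = (\<lambda>_. 0)" using kN unfolding kills_def by blast
    thus ?thesis by (simp add: g_def)
  qed
  define c where "c = diff_op a1 g 0"
  have const: "diff_op a1 g x = c" for x
  proof -
    have "diff_op x (diff_op a1 g) 0 = 0" using dd[of x] by simp
    hence "diff_op a1 g (0 + x) - diff_op a1 g 0 = 0" unfolding diff_op_def[of x] by simp
    thus ?thesis by (simp add: c_def)
  qed
  have cne: "c \<noteq> 0"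
  proof
    assume "c = 0"
    hence "diff_op a1 g = (\<lambda>_. 0)" using const by auto
    thus False using nz as g_def by simp
  qed
  have step: "g (x + a1) = g x + c" for x
    using const[of x] unfolding diff_op_def by (simp add: diff_eq_eq add.commute)
  have "a1 \<in> tors" using tA by simp
  then obtain m where m: "m > 0" "nsmul m a1 = 0" by (auto simp: tors_def)
  have "g (0 + nsmul m a1) = g 0 + nsmul m c" by (rule telescope[where g=g and a=a1 and c=c, OF step])
  hence "nsmul m c = 0" using m by simp
  hence ct: "c \<in> tors" using m unfolding tors_def by auto
  have rg: "range g \<subseteq> C" unfolding g_def by (rule foldr_range[OF C rf])
  have "c = g (0 + a1) - g 0" using const[of 0] by (simp add: diff_op_def)
  moreover have "g a1 \<in> C" "g 0 \<in> C" using rg by auto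
  ultimately have "c \<in> C" using C unfolding is_subgroup_def by auto
  thus False using ct TC cne by auto
qed

lemma fdeg_Fin0: "f \<noteq> (\<lambda>_. 0) \<Longrightarrow> kills 0 f \<Longrightarrow> fdeg f = Fin 0"
  unfolding fdeg_def by auto

lemma fdeg_Fin: "fdeg f = Fin n \<Longrightarrow> f \<noteq> (\<lambda>_. 0) \<and> kills n f"
  unfolding fdeg_def by (auto split: if_splits intro: LeastI)

lemma fdeg_NegInf: "fdeg f = NegInf \<Longrightarrow> f = (\<lambda>_. 0)"
  unfolding fdeg_def by (auto split: if_splits)

lemma fdeg_zero: "fdeg (\<lambda>_. 0) = NegInf"
  unfolding fdeg_def by auto

lemma fdeg_cases:
  fixes f :: "'a::ab_group_add \<Rightarrow> 'b::ab_group_add"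
  assumes tA: "(tors :: 'a set) = UNIV" and C: "is_subgroup C" and TC: "tors \<inter> C = {0}"
    and rf: "range f \<subseteq> C"
  shows "fdeg f \<in> {NegInf, Fin 0, PosInf}"
  using main_kills0[OF tA C TC rf] unfolding fdeg_def by auto

lemma const_Fin0: "(c::'b::ab_group_add) \<noteq> 0 \<Longrightarrow> fdeg (\<lambda>_::'a::ab_group_add. c) = Fin 0"
proof (rule fdeg_Fin0)
  assume "c \<noteq> 0"
  then show "(\<lambda>_::'a. c) \<noteq> (\<lambda>_. 0)" by (metis)
  show "kills 0 (\<lambda>_::'a. c)" unfolding kills_def
  proof (intro allI impI)
    fix as :: "'a list" assume "length as = Suc 0"
    then obtain a where "as = [a]" by (cases as) auto
    then show "foldr diff_op as (\<lambda>_. c) = (\<lambda>_. 0)" by (simp add: diff_op_def)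
  qed
qed

lemma delta_PosInf:
  fixes c :: "'b::ab_group_add"
  assumes tA: "(tors :: 'a::ab_group_add set) = UNIV" and C: "is_subgroup C" and TC: "tors \<inter> C = {0}"
    and cC: "c \<in> C" and c0: "c \<noteq> 0" and a0: "(a0::'a) \<noteq> 0"
  shows "fdeg (\<lambda>x::'a. if x = 0 then c else 0) = PosInf"
proof -
  let ?f = "\<lambda>x::'a. if x = 0 then c else 0"
  have r: "range ?f \<subseteq> C" using cC C by (auto simp: is_subgroup_def)
  have "?f \<noteq> (\<lambda>_. 0)" using c0 by (metis)
  hence n1: "fdeg ?f \<noteq> NegInf" using fdeg_NegInf by blast
  have "fdeg ?f \<noteq> Fin 0"
  proof
    assume "fdeg ?f = Fin 0"
    hence "kills 0 ?f" using fdeg_Fin by blast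
    hence "?f (0 + a0) = ?f 0" by (rule kills0_const)
    thus False using a0 c0 by simp
  qed
  moreover have "fdeg ?f \<in> {NegInf, Fin 0, PosInf}" by (rule fdeg_cases[OF tA C TC r])
  ultimately show ?thesis using n1 by blast
qed

lemma part_a:
  assumes ntA: "\<exists>a::'a. a \<noteq> 0" and ntB: "\<exists>b::'b. b \<noteq> 0"
    and tA: "torsion_group (A :: 'a::ab_group_add itself)" and tB: "torsion_free (B :: 'b::ab_group_add itself)"
  shows "DD A (UNIV :: 'b set) = {NegInf, Fin 0, PosInf}"
proof -
  have tA': "(tors :: 'a set) = UNIV" using tA by (simp add: torsion_group_def)
  have TC: "(tors :: 'b set) \<inter> UNIV = {0}" using tB by (simp add: torsion_free_def)
  have C: "is_subgroup (UNIV :: 'b set)" by (simp add: is_subgroup_def)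
  obtain a0 :: 'a where a0: "a0 \<noteq> 0" using ntA by blast
  obtain b0 :: 'b where b0: "b0 \<noteq> 0" using ntB by blast
  show ?thesis
  proof
    show "DD A (UNIV :: 'b set) \<subseteq> {NegInf, Fin 0, PosInf}"
      unfolding DD_def
    proof (rule subsetI)
      fix d assume "d \<in> fdeg ` {f :: 'a \<Rightarrow> 'b. range f \<subseteq> UNIV}"
      then obtain f :: "'a \<Rightarrow> 'b" where "d = fdeg f" by blast
      moreover have "fdeg f \<in> {NegInf, Fin 0, PosInf}" using fdeg_cases[OF tA' C TC, of f] by simp
      ultimately show "d \<in> {NegInf, Fin 0, PosInf}" by simp
    qed
  next
    have "NegInf \<in> DD A (UNIV :: 'b set)" unfolding DD_def
      using fdeg_zero by (metis (mono_tags, lifting) UNIV_I image_eqI mem_Collect_eq subsetI)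
    moreover have "Fin 0 \<in> DD A (UNIV :: 'b set)" unfolding DD_def
      using const_Fin0[OF b0] by (metis (mono_tags, lifting) UNIV_I image_eqI mem_Collect_eq subsetI)
    moreover have "PosInf \<in> DD A (UNIV :: 'b set)" unfolding DD_def
      using delta_PosInf[OF tA' C TC _ b0 a0] by (metis (mono_tags, lifting) UNIV_I image_eqI mem_Collect_eq subsetI)
    ultimately show "{NegInf, Fin 0, PosInf} \<subseteq> DD A (UNIV :: 'b set)" by auto
  qed
qed


lemma kills_zero: "kills n (\<lambda>_. 0::'b::ab_group_add)"
  unfolding kills_def by (simp add: foldr_zero)

lemma DD_I:
  fixes A :: "'a::ab_group_add itself" and f :: "'a \<Rightarrow> 'b::ab_group_add"
  assumes "range f \<subseteq> S" "fdeg f = d" shows "d \<in> DD A S"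
  unfolding DD_def using assms by blast

lemma part_b:
  assumes ntA: "\<exists>a::'a. a \<noteq> 0"
    and tA: "torsion_group (A :: 'a::ab_group_add itself)" and sB: "torsion_split (B :: 'b::ab_group_add itself)"
    and t0: "(tors :: 'b set) \<noteq> {0}" and tU: "(tors :: 'b set) \<noteq> UNIV"
  shows "DD A (UNIV :: 'b set) = DD A (tors :: 'b set) \<union> {PosInf}"
proof -
  have tA': "(tors :: 'a set) = UNIV" using tA by (simp add: torsion_group_def)
  obtain C :: "'b set" where C: "is_subgroup C" and TC: "tors \<inter> C = {0}"
      and dec: "\<forall>b. \<exists>t\<in>tors. \<exists>c\<in>C. b = t + c"
    using sB unfolding torsion_split_def by blast
  define pC where "pC b = (SOME c. c \<in> C \<and> b - c \<in> tors)" for b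
  have pC: "pC b \<in> C \<and> b - pC b \<in> tors" for b
  proof -
    obtain t c where "t \<in> tors" "c \<in> C" "b = t + c" using dec by blast
    hence "\<exists>c. c \<in> C \<and> b - c \<in> tors" by (intro exI[of _ c]) simp
    thus ?thesis unfolding pC_def by (rule someI_ex)
  qed
  have uniq: "pC b = c" if "c \<in> C" "b - c \<in> tors" for b c
  proof -
    have "pC b - c \<in> C" using C pC[of b] that unfolding is_subgroup_def by auto
    moreover have "(b - c) - (b - pC b) \<in> tors" using tors_diff that pC[of b] by blast
    moreover have "(b - c) - (b - pC b) = pC b - c" by simp
    ultimately have "pC b - c = 0" using TC by (metis IntI singletonD)
    thus ?thesis by simp
  qed
  have hom: "pC (x - y) = pC x - pC y" for x y
  proof (rule uniq)
    show "pC x - pC y \<in> C" using C pC unfolding is_subgroup_def by auto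
    have "(x - pC x) - (y - pC y) \<in> tors" using tors_diff pC by blast
    moreover have "(x - pC x) - (y - pC y) = (x - y) - (pC x - pC y)" by simp
    ultimately show "(x - y) - (pC x - pC y) \<in> tors" by simp
  qed
  have pC0: "pC 0 = 0" using hom[of 0 0] by simp
  obtain a0 :: 'a where a0: "a0 \<noteq> 0" using ntA by blast
  obtain b1 :: 'b where b1: "b1 \<notin> tors" using tU by blast
  obtain c1 where c1: "c1 \<in> C" "c1 \<noteq> 0"
  proof -
    obtain t c where tc: "t \<in> tors" "c \<in> C" "b1 = t + c" using dec by blast
    moreover have "c \<noteq> 0" using b1 tc by auto
    ultimately show ?thesis using that by blast
  qed
  obtain t1 where t1: "t1 \<in> tors" "t1 \<noteq> (0::'b)" using t0 zero_tors by blast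
  show ?thesis
  proof
    show "DD A (UNIV :: 'b set) \<subseteq> DD A (tors :: 'b set) \<union> {PosInf}"
    proof (rule subsetI)
      fix d assume "d \<in> DD A (UNIV :: 'b set)"
      then obtain f :: "'a \<Rightarrow> 'b" where d: "d = fdeg f" unfolding DD_def by blast
      define fC where "fC = (\<lambda>x. pC (f x))"
      define fT where "fT = (\<lambda>x. f x - fC x)"
      have rT: "range fT \<subseteq> tors" using pC unfolding fT_def fC_def by auto
      have rC: "range fC \<subseteq> C" using pC unfolding fC_def by auto
      show "d \<in> DD A (tors :: 'b set) \<union> {PosInf}"
      proof (cases "fdeg f")
        case NegInf
        hence "f = (\<lambda>_. 0)" by (rule fdeg_NegInf)
        hence "d = fdeg (\<lambda>_::'a. 0::'b)" using d by simp
        moreover have "range (\<lambda>_::'a. 0::'b) \<subseteq> tors" using zero_tors by auto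
        ultimately have "d \<in> DD A (tors :: 'b set)" using DD_I[where A=A and f="\<lambda>_::'a. 0::'b" and S=tors] by simp
        thus ?thesis by simp
      next
        case PosInf thus ?thesis using d by simp
      next
        case (Fin n)
        from fdeg_Fin[OF Fin] have fnz: "f \<noteq> (\<lambda>_. 0)" and kf: "kills n f" by auto
        have knC: "kills n fC" unfolding kills_def
        proof (intro allI impI)
          fix as :: "'a list" assume "length as = Suc n"
          hence "foldr diff_op as f = (\<lambda>_. 0)" using kf unfolding kills_def by blast
          thus "foldr diff_op as fC = (\<lambda>_. 0)"
            unfolding fC_def foldr_hom[of pC, OF hom] by (simp add: pC0)
        qed
        have k0: "kills 0 fC" by (rule main_kills0[OF tA' C TC rC knC])
        have kC: "kills m fC" for m using kills_mono[OF _ k0] by simp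
        have eqk: "kills m f \<longleftrightarrow> kills m fT" for m
        proof
          assume "kills m f" thus "kills m fT" unfolding fT_def using kills_diff kC by blast
        next
          assume "kills m fT"
          hence "kills m (\<lambda>x. fT x + fC x)" using kills_add kC by blast
          thus "kills m f" by (simp add: fT_def)
        qed
        show ?thesis
        proof (cases "fT = (\<lambda>_. 0)")
          case True
          hence "kills 0 f" using eqk kills_zero by metis
          hence "fdeg f = Fin 0" by (rule fdeg_Fin0[OF fnz])
          moreover have "fdeg (\<lambda>_::'a. t1) = Fin 0" by (rule const_Fin0[OF t1(2)])
          moreover have "range (\<lambda>_::'a. t1) \<subseteq> tors" using t1 by auto
          ultimately have "d \<in> DD A (tors :: 'b set)" using d DD_I[where A=A and f="\<lambda>_::'a. t1" and S=tors] by simp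
          thus ?thesis by simp
        next
          case False
          have "fdeg f = fdeg fT" unfolding fdeg_def using False fnz eqk by simp
          hence "d \<in> DD A (tors :: 'b set)" using d rT DD_I[where A=A and f=fT and S=tors] by simp
          thus ?thesis by simp
        qed
      qed
    qed
  next
    have "DD A (tors :: 'b set) \<subseteq> DD A (UNIV::'b set)" unfolding DD_def by blast
    moreover have "PosInf \<in> DD A (UNIV :: 'b set)" unfolding DD_def
      using delta_PosInf[OF tA' C TC c1 a0] by (metis (mono_tags, lifting) UNIV_I image_eqI mem_Collect_eq subsetI)
    ultimately show "DD A (tors :: 'b set) \<union> {PosInf} \<subseteq> DD A (UNIV :: 'b set)" by blast
  qed
qed

declare foldr_replicate[simp del]

definition Sint :: "(int \<Rightarrow> 'b::ab_group_add) \<Rightarrow> int \<Rightarrow> 'b" where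
  "Sint \<psi> k = (if k \<ge> 0 then (\<Sum>j<nat k. \<psi> (int j)) else - (\<Sum>j<nat (-k). \<psi> (- int j - 1)))"

lemma Sint_step: "Sint \<psi> (k + 1) - Sint \<psi> k = \<psi> k"
proof (cases "k \<ge> 0")
  case True
  hence "nat (k+1) = Suc (nat k)" by simp
  thus ?thesis using True by (simp add: Sint_def)
next
  case False
  show ?thesis
  proof (cases "k = -1")
    case True thus ?thesis by (simp add: Sint_def)
  next
    case F2: False
    define m where "m = nat (-k-1)"
    have e: "nat (-k) = Suc m" "nat (-(k+1)) = m" "- int m - 1 = k" using False F2 m_def by auto
    have "\<not> (k + 1 \<ge> 0)" using False F2 by simp
    thus ?thesis using False e by (simp add: Sint_def algebra_simps)
  qed
qed

lemma diff_Sint: "diff_op 1 (Sint \<psi>) = \<psi>"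
  by (rule ext) (simp add: diff_op_def Sint_step)

lemma foldr_rep_Suc': "foldr diff_op (replicate (Suc n) a) \<psi> = foldr diff_op (replicate n a) (diff_op a \<psi>)"
proof -
  have "replicate (Suc n) a = replicate n a @ [a]" by (simp add: replicate_append_same)
  thus ?thesis by simp
qed

lemma D_phi: "foldr diff_op (replicate n (1::int)) ((Sint ^^ n) \<psi>) = \<psi>"
proof (induction n)
  case 0 then show ?case by simp
next
  case (Suc n)
  have "foldr diff_op (replicate (Suc n) (1::int)) ((Sint ^^ Suc n) \<psi>)
      = foldr diff_op (replicate n 1) (diff_op 1 (Sint ((Sint ^^ n) \<psi>)))"
    by (simp only: foldr_rep_Suc' funpow.simps comp_def)
  also have "\<dots> = \<psi>" using Suc by (simp add: diff_Sint)
  finally show ?case .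
qed

lemma diff_op_comm: "diff_op a (diff_op c g) = diff_op c (diff_op a g)"
  by (rule ext) (simp add: diff_op_def algebra_simps)

lemma foldr_rep_comm: "foldr diff_op (replicate m a) (diff_op c g) = diff_op c (foldr diff_op (replicate m a) g)"
  by (induction m) (simp_all add: diff_op_comm)

lemma const_int: assumes "diff_op 1 (g :: int \<Rightarrow> 'b::ab_group_add) = (\<lambda>_. 0)" shows "diff_op c g = (\<lambda>_. 0)"
proof -
  have s: "g (x + 1) = g x" for x using fun_cong[OF assms, of x] by (simp add: diff_op_def)
  have "g k = g 0" for k
  proof (induction k rule: int_induct[where k=0])
    case base then show ?case by simp
  next
    case (step1 i) then show ?case using s by simp
  next
    case (step2 i) then show ?case using s[of "i - 1"] by simp
  qed
  hence "g (x + c) = g x" for x by metis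
  thus ?thesis by (simp add: diff_op_def)
qed

lemma kills_int: assumes "foldr diff_op (replicate (Suc n) (1::int)) \<phi> = (\<lambda>_. 0::'b::ab_group_add)"
  shows "kills n \<phi>"
proof -
  have gen: "length cs \<le> Suc n \<Longrightarrow> foldr diff_op (replicate (Suc n - length cs) 1) (foldr diff_op cs \<phi>) = (\<lambda>_. 0)" for cs
  proof (induction cs)
    case Nil then show ?case using assms by simp
  next
    case (Cons c cs)
    define m where "m = n - length cs"
    have lm: "Suc n - length cs = Suc m" "Suc n - length (c # cs) = m" using Cons.prems m_def by auto
    define g where "g = foldr diff_op cs \<phi>"
    define h where "h = foldr diff_op (replicate m (1::int)) g"
    have "foldr diff_op (replicate (Suc m) (1::int)) g = (\<lambda>_. 0)" using Cons lm g_def by simp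
    hence "diff_op 1 h = (\<lambda>_. 0)" by (simp add: h_def)
    hence "diff_op c h = (\<lambda>_. 0)" by (rule const_int)
    thus ?case using lm by (simp add: foldr_rep_comm h_def g_def)
  qed
  show ?thesis unfolding kills_def
  proof (intro allI impI)
    fix cs :: "int list" assume "length cs = Suc n"
    then show "foldr diff_op cs \<phi> = (\<lambda>_. 0)" using gen[of cs] by simp
  qed
qed

lemma fdeg_phi: assumes b: "(b::'b::ab_group_add) \<noteq> 0"
  shows "fdeg ((Sint ^^ n) (\<lambda>_::int. b)) = Fin n"
proof -
  let ?p = "(Sint ^^ n) (\<lambda>_::int. b)"
  have Dn: "foldr diff_op (replicate n (1::int)) ?p = (\<lambda>_. b)" by (rule D_phi)
  have "foldr diff_op (replicate (Suc n) (1::int)) ?p = (\<lambda>_. 0)" using Dn by (simp add: diff_op_def)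
  hence kn: "kills n ?p" by (rule kills_int)
  have nz: "?p \<noteq> (\<lambda>_. 0)"
  proof
    assume "?p = (\<lambda>_. 0)"
    hence "(\<lambda>_::int. b) = (\<lambda>_. 0)" using Dn by (simp add: foldr_zero)
    thus False using b by metis
  qed
  have le: "n \<le> m" if km: "kills m ?p" for m
  proof (rule ccontr)
    assume "\<not> n \<le> m"
    hence "kills (n - 1) ?p" using kills_mono[OF _ km] by simp
    moreover have "length (replicate n (1::int)) = Suc (n - 1)" using \<open>\<not> n \<le> m\<close> by simp
    ultimately have "foldr diff_op (replicate n (1::int)) ?p = (\<lambda>_. 0)" unfolding kills_def by blast
    hence "(\<lambda>_::int. b) = (\<lambda>_. 0)" using Dn by simp
    thus False using b by metis
  qed
  have "(LEAST m. kills m ?p) = n" by (rule Least_equality[of "\<lambda>m. kills m ?p", OF kn le])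
  thus ?thesis unfolding fdeg_def using nz kn by auto
qed

lemma delta_int: "k \<le> - int n \<Longrightarrow> foldr diff_op (replicate n (1::int)) (\<lambda>x. if x = 0 then b else 0) k = (if k = - int n then b else (0::'b::ab_group_add))"
proof (induction n arbitrary: k)
  case 0 then show ?case by simp
next
  case (Suc n)
  let ?G = "foldr diff_op (replicate n (1::int)) (\<lambda>x. if x = 0 then b else 0)"
  have a: "?G (k + 1) = (if k + 1 = - int n then b else 0)" using Suc.IH[of "k+1"] Suc.prems by simp
  have c: "?G k = 0" using Suc.IH[of k] Suc.prems by simp
  have "foldr diff_op (replicate (Suc n) (1::int)) (\<lambda>x. if x = 0 then b else 0) k = ?G (k + 1) - ?G k"
    by (simp add: diff_op_def)
  also have "\<dots> = (if k = - int (Suc n) then b else 0)" using a c by auto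
  finally show ?case .
qed

lemma fdeg_delta_int: assumes b: "(b::'b::ab_group_add) \<noteq> 0"
  shows "fdeg (\<lambda>x::int. if x = 0 then b else 0) = PosInf"
proof -
  let ?d = "\<lambda>x::int. if x = 0 then b else 0"
  have nk: "\<not> kills n ?d" for n
  proof
    assume "kills n ?d"
    hence "foldr diff_op (replicate (Suc n) (1::int)) ?d = (\<lambda>_. 0)" unfolding kills_def by (metis length_replicate)
    hence "foldr diff_op (replicate (Suc n) (1::int)) ?d (- int (Suc n)) = 0" by simp
    thus False using delta_int[of "- int (Suc n)" "Suc n" b] b by simp
  qed
  have "?d \<noteq> (\<lambda>_. 0)" using b by metis
  thus ?thesis unfolding fdeg_def using nk by auto
qed

lemma fdeg_comp:
  fixes h :: "'a::ab_group_add \<Rightarrow> int" and \<phi> :: "int \<Rightarrow> 'b::ab_group_add"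
  assumes hadd: "\<And>x y. h (x + y) = h x + h y" and hs: "surj h"
  shows "fdeg (\<lambda>x. \<phi> (h x)) = fdeg \<phi>"
proof -
  have fc: "foldr diff_op as (\<lambda>x. \<phi> (h x)) = (\<lambda>x. foldr diff_op (map h as) \<phi> (h x))" for as
    by (induction as) (auto simp: diff_op_def[of "_::'a"] diff_op_def[of "_::int"] hadd)
  have z: "(\<lambda>x. \<psi> (h x)) = (\<lambda>_. 0) \<longleftrightarrow> \<psi> = (\<lambda>_. 0::'b)" for \<psi>
  proof
    assume a: "(\<lambda>x. \<psi> (h x)) = (\<lambda>_. 0)"
    show "\<psi> = (\<lambda>_. 0)"
    proof
      fix k obtain x where "k = h x" using surjD[OF hs] by blast
      thus "\<psi> k = 0" using fun_cong[OF a, of x] by simp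
    qed
  qed simp
  have k: "kills n (\<lambda>x. \<phi> (h x)) \<longleftrightarrow> kills n \<phi>" for n
  proof
    assume a: "kills n (\<lambda>x. \<phi> (h x))"
    show "kills n \<phi>" unfolding kills_def
    proof (intro allI impI)
      fix bs :: "int list" assume l: "length bs = Suc n"
      define as where "as = map (\<lambda>y. SOME x. h x = y) bs"
      have hi: "h (SOME x. h x = y) = y" for y by (metis (mono_tags) hs someI_ex surjD)
      have mb: "map h as = bs" unfolding as_def by (simp add: comp_def hi)
      have "length as = Suc n" using l as_def by simp
      hence "foldr diff_op as (\<lambda>x. \<phi> (h x)) = (\<lambda>_. 0)" using a unfolding kills_def by blast
      hence "(\<lambda>x. foldr diff_op bs \<phi> (h x)) = (\<lambda>_. 0)" using fc[of as] mb by simp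
      thus "foldr diff_op bs \<phi> = (\<lambda>_. 0)" using z by blast
    qed
  next
    assume a: "kills n \<phi>"
    show "kills n (\<lambda>x. \<phi> (h x))" unfolding kills_def
    proof (intro allI impI)
      fix as :: "'a list" assume "length as = Suc n"
      hence "foldr diff_op (map h as) \<phi> = (\<lambda>_. 0)" using a unfolding kills_def by simp
      thus "foldr diff_op as (\<lambda>x. \<phi> (h x)) = (\<lambda>_. 0)" using fc[of as] by simp
    qed
  qed
  show ?thesis unfolding fdeg_def using z[of \<phi>] k by simp
qed

lemma part_c:
  fixes A :: "'a::ab_group_add itself"
  assumes ntB: "\<exists>b::'b. b \<noteq> 0"
    and hh: "\<exists>h :: 'a \<Rightarrow> int. (\<forall>x y. h (x + y) = h x + h y) \<and> surj h"
  shows "DD A (UNIV :: 'b::ab_group_add set) = UNIV"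
proof -
  obtain h :: "'a \<Rightarrow> int" where hadd: "\<And>x y. h (x + y) = h x + h y" and hs: "surj h" using hh by blast
  obtain b0 :: 'b where b0: "b0 \<noteq> 0" using ntB by blast
  have "d \<in> DD A (UNIV :: 'b set)" for d
  proof (cases d)
    case NegInf
    then show ?thesis unfolding DD_def using fdeg_zero
      by (metis (mono_tags, lifting) UNIV_I image_eqI mem_Collect_eq subsetI)
  next
    case (Fin n)
    have "fdeg (\<lambda>x. (Sint ^^ n) (\<lambda>_::int. b0) (h x)) = Fin n"
      using fdeg_comp[OF hadd hs, of "(Sint ^^ n) (\<lambda>_::int. b0)"] fdeg_phi[OF b0] by simp
    then show ?thesis unfolding DD_def using Fin
      by (metis (mono_tags, lifting) UNIV_I image_eqI mem_Collect_eq subsetI)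
  next
    case PosInf
    have "fdeg (\<lambda>x. (\<lambda>k::int. if k = 0 then b0 else 0) (h x)) = PosInf"
      using fdeg_comp[OF hadd hs, of "\<lambda>k::int. if k = 0 then b0 else 0"] fdeg_delta_int[OF b0] by simp
    then show ?thesis unfolding DD_def using PosInf
      by (metis (mono_tags, lifting) UNIV_I image_eqI mem_Collect_eq subsetI)
  qed
  thus ?thesis by blast
qed

theorem proposition3p9:
  fixes A :: "'a::ab_group_add itself" and B :: "'b::ab_group_add itself"
  assumes ntA: "\<exists>a::'a. a \<noteq> 0" and ntB: "\<exists>b::'b. b \<noteq> 0"
  shows
   "(torsion_group A \<and> torsion_free B \<longrightarrow>
       DD A (UNIV :: 'b set) = {NegInf, Fin 0, PosInf})
  \<and> (torsion_group A \<and> torsion_split B \<and> (tors :: 'b set) \<noteq> {0} \<and> (tors :: 'b set) \<noteq> UNIV \<longrightarrow>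
       DD A (UNIV :: 'b set) = DD A (tors :: 'b set) \<union> {PosInf})
  \<and> ((\<exists>h :: 'a \<Rightarrow> int. (\<forall>x y. h (x + y) = h x + h y) \<and> surj h) \<longrightarrow>
       DD A (UNIV :: 'b set) = UNIV)"
proof (intro conjI impI)
  assume a: "torsion_group A \<and> torsion_free B"
  show "DD A (UNIV :: 'b set) = {NegInf, Fin 0, PosInf}"
    by (rule part_a[OF ntA ntB]) (use a in auto)
next
  assume a: "torsion_group A \<and> torsion_split B \<and> (tors :: 'b set) \<noteq> {0} \<and> (tors :: 'b set) \<noteq> UNIV"
  show "DD A (UNIV :: 'b set) = DD A (tors :: 'b set) \<union> {PosInf}"
    by (rule part_b[OF ntA]) (use a in auto)
next
  assume a: "\<exists>h :: 'a \<Rightarrow> int. (\<forall>x y. h (x + y) = h x + h y) \<and> surj h"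
  show "DD A (UNIV :: 'b set) = UNIV"
    by (rule part_c[OF ntB a])
qed

end
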